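(* For any simple graph $G$ and any integer $k \geq 1$, $2\alpha'_k(G) \geq k|V(G)| - \phi_k(G)$.
   Context: $\alpha'_k(G)$ is the maximum number of edges of a $k$-edge-colorable subgraph of $G$. For $D\subseteq V(G)$, $\phi_k(D)=k|D|-|E(G[D])|$ and $\phi_k(G)=\max_{D\subseteq V(G)}\phi_k(D)$. *)

theory Defs
  imports Main
begin

definition simple_graph :: "'a set \<Rightarrow> 'a set set \<Rightarrow> bool" where
  "simple_graph V E \<longleftrightarrow> finite V \<and>
     (\<forall>e\<in>E. \<exists>u v. e = {u, v} \<and> u \<noteq> v \<and> u \<in> V \<and> v \<in> V)"

definition k_edge_colorable :: "nat \<Rightarrow> 'a set set \<Rightarrow> bool" where
  "k_edge_colorable k F \<longleftrightarrow> (\<exists>c :: 'a set \<Rightarrow> nat.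
     (\<forall>e\<in>F. c e < k) \<and>
     (\<forall>e\<in>F. \<forall>f\<in>F. e \<noteq> f \<and> e \<inter> f \<noteq> {} \<longrightarrow> c e \<noteq> c f))"

text \<open>alpha'_k(G): maximum number of edges of a k-edge-colourable subgraph of G
  (a subgraph's edges form a subset F of E; vertices are irrelevant to the count).\<close>
definition alpha_k :: "nat \<Rightarrow> 'a set set \<Rightarrow> nat" where
  "alpha_k k E = Max {card F | F. F \<subseteq> E \<and> k_edge_colorable k F}"

definition induced_edges :: "'a set set \<Rightarrow> 'a set \<Rightarrow> 'a set set" where
  "induced_edges E D = {e \<in> E. e \<subseteq> D}"

definition phi_set :: "nat \<Rightarrow> 'a set set \<Rightarrow> 'a set \<Rightarrow> int" where
  "phi_set k E D = int k * int (card D) - int (card (induced_edges E D))"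

definition phi_graph :: "nat \<Rightarrow> 'a set \<Rightarrow> 'a set set \<Rightarrow> int" where
  "phi_graph k V E = Max (phi_set k E ` Pow V)"

end

theory Submission
  imports Defs
begin

definition proper :: "nat \<Rightarrow> 'a set set \<Rightarrow> ('a set \<Rightarrow> nat) \<Rightarrow> bool" where
  "proper k F c \<longleftrightarrow> (\<forall>e\<in>F. c e < k) \<and> (\<forall>e\<in>F. \<forall>f\<in>F. e \<noteq> f \<and> e \<inter> f \<noteq> {} \<longrightarrow> c e \<noteq> c f)"

lemma kec_iff: "k_edge_colorable k F \<longleftrightarrow> (\<exists>c. proper k F c)"
  unfolding k_edge_colorable_def proper_def by blast

lemma proper_add:
  assumes "proper k H c" "a < k" "\<forall>f\<in>H. u \<in> f \<longrightarrow> c f \<noteq> a" "\<forall>f\<in>H. v \<in> f \<longrightarrow> c f \<noteq> a" "{u,v} \<notin> H"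
  shows "proper k (insert {u,v} H) (c({u,v} := a))"
  using assms unfolding proper_def by auto

lemma proper_swap:
  assumes "proper k H c" "a < k" "b < k"
    and cl: "\<forall>e\<in>H. (c e = a \<or> c e = b) \<longrightarrow> e \<inter> S \<noteq> {} \<longrightarrow> e \<subseteq> S"
  shows "proper k H (\<lambda>e. if e \<inter> S \<noteq> {} \<and> c e = a then b else if e \<inter> S \<noteq> {} \<and> c e = b then a else c e)"
proof -
  have pr: "\<forall>e\<in>H. \<forall>f\<in>H. e \<noteq> f \<and> e \<inter> f \<noteq> {} \<longrightarrow> c e \<noteq> c f" "\<forall>e\<in>H. c e < k"
    using assms(1) unfolding proper_def by blast+
  define t where "t x = (if x = a then b else if x = b then a else x)" for x
  have tinj: "t x = t y \<Longrightarrow> x = y" for x y unfolding t_def by (auto split: if_splits)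
  define c' where "c' = (\<lambda>e. if e \<inter> S \<noteq> {} then t (c e) else c e)"
  have c'eq: "(\<lambda>e. if e \<inter> S \<noteq> {} \<and> c e = a then b else if e \<inter> S \<noteq> {} \<and> c e = b then a else c e) = c'"
    unfolding c'_def t_def by (rule ext) simp
  have "c' e \<noteq> c' f" if ef: "e \<in> H" "f \<in> H" "e \<noteq> f" "e \<inter> f \<noteq> {}" for e f
  proof -
    have ne: "c e \<noteq> c f" using pr ef by blast
    show ?thesis
    proof (cases "e \<inter> S \<noteq> {}")
      case eS: True
      show ?thesis
      proof (cases "f \<inter> S \<noteq> {}")
        case True
        then show ?thesis using eS ne tinj unfolding c'_def by auto
      next
        case False
        then have "\<not> (c e = a \<or> c e = b)" using cl ef eS by blast
        then have "t (c e) = c e" unfolding t_def by auto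
        then show ?thesis using eS False ne unfolding c'_def by auto
      qed
    next
      case eS: False
      show ?thesis
      proof (cases "f \<inter> S \<noteq> {}")
        case True
        then have "\<not> (c f = a \<or> c f = b)" using cl ef eS by blast
        then have "t (c f) = c f" unfolding t_def by auto
        then show ?thesis using eS True ne unfolding c'_def by auto
      next
        case False
        then show ?thesis using eS ne unfolding c'_def by auto
      qed
    qed
  qed
  moreover have "c' e < k" if "e \<in> H" for e using pr that assms(2,3) unfolding c'_def t_def by auto
  ultimately show ?thesis unfolding proper_def c'eq by blast
qed

lemma three_leaves:
  assumes "finite W" "R \<subseteq> W \<times> W" "\<And>p q. (p,q) \<in> R \<Longrightarrow> (q,p) \<in> R" "\<And>p. (p,p) \<notin> R"
    "\<And>p. card (R``{p}) \<le> 2" "card (R``{x}) \<le> 1"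
    "(x,y1) \<in> R\<^sup>*" "(x,y2) \<in> R\<^sup>*" "y1 \<noteq> x" "y2 \<noteq> x" "y1 \<noteq> y2"
    "card (R``{y1}) \<le> 1" "card (R``{y2}) \<le> 1"
  shows False
  using assms
proof (induction "card W" arbitrary: W R x y1 y2 rule: less_induct)
  case less
  have fin: "finite (R``{p})" for p
  proof (rule finite_subset[of _ W])
    show "R``{p} \<subseteq> W" using less.prems(2) by blast
  qed (use less.prems(1) in simp)
  obtain y where xy: "(x,y) \<in> R"
    using less.prems(7) apply (rule converse_rtranclE) using less.prems(9) by auto
  have Rx: "R``{x} = {y}"
  proof -
    have "y \<in> R``{x}" using xy by blast
    then show ?thesis using less.prems(6) card_le_Suc0_iff_eq[OF fin[of x]] by auto
  qed
  have yx: "y \<noteq> x" using xy less.prems(4) by blast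
  define R' where "R' = {(p,q). (p,q) \<in> R \<and> p \<noteq> x \<and> q \<noteq> x}"
  define W' where "W' = W - {x}"
  have reach: "(y,z) \<in> R'\<^sup>*" if "(x,z) \<in> R\<^sup>*" "z \<noteq> x" for z
    using that
  proof (induction rule: rtrancl_induct)
    case base then show ?case by simp
  next
    case (step z w)
    show ?case
    proof (cases "z = x")
      case True
      then have "w = y" using step(2) Rx by auto
      then show ?thesis by simp
    next
      case False
      then have "(y,z) \<in> R'\<^sup>*" using step.IH by simp
      moreover have "(z,w) \<in> R'" using step False R'_def by simp
      ultimately show ?thesis by (rule rtrancl_into_rtrancl)
    qed
  qed
  have sub: "R'``{p} \<subseteq> R``{p}" for p unfolding R'_def by blast
  have Ry: "R'``{y} = R``{y} - {x}" unfolding R'_def using yx by blast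
  have xin: "x \<in> R``{y}" using less.prems(3) xy by blast
  have cy: "card (R'``{y}) \<le> 1" using Ry xin fin[of y] less.prems(5)[of y] by (simp add: card_Diff_singleton)
  have r1: "(y,y1) \<in> R'\<^sup>*" using reach[OF less.prems(7,9)] .
  have r2: "(y,y2) \<in> R'\<^sup>*" using reach[OF less.prems(8,10)] .
  have leaf_y: False if "card (R``{y}) \<le> 1" "(y,z) \<in> R'\<^sup>*" "z \<noteq> y" for z
  proof -
    have "R``{y} = {x}" using that(1) xin card_le_Suc0_iff_eq[OF fin[of y]] by auto
    then have e: "R'``{y} = {}" using Ry by blast
    show False using that(2) apply (rule converse_rtranclE) using that(3) e by auto
  qed
  show False
  proof (cases "y1 = y")
    case True
    then show ?thesis using leaf_y[of y2] less.prems(11,12) r2 by auto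
  next
    case F1: False
    show False
  proof (cases "y2 = y")
    case True
    then show ?thesis using leaf_y[of y1] less.prems(11,13) r1 by auto
  next
    case False
    show False
    proof (rule less.hyps[of W' R' y y1 y2])
      have "x \<in> W" using xy less.prems(2) by blast
      then show "card W' < card W" unfolding W'_def using less.prems(1) by (intro card_Diff1_less)
      show "finite W'" unfolding W'_def using less.prems(1) by simp
      show "R' \<subseteq> W' \<times> W'" unfolding R'_def W'_def using less.prems(2) by blast
      show "(q,p) \<in> R'" if "(p,q) \<in> R'" for p q using that less.prems(3) unfolding R'_def by blast
      show "(p,p) \<notin> R'" for p using less.prems(4) unfolding R'_def by blast
      show "card (R'``{p}) \<le> 2" for p using card_mono[OF fin sub, of p] less.prems(5)[of p] by linarith
      show "card (R'``{y}) \<le> 1" by (rule cy)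
      show "(y,y1) \<in> R'\<^sup>*" "(y,y2) \<in> R'\<^sup>*" by (rule r1, rule r2)
      show "y1 \<noteq> y" "y2 \<noteq> y" using False F1 by auto
      show "y1 \<noteq> y2" by (rule less.prems(11))
      show "card (R'``{y1}) \<le> 1" using card_mono[OF fin sub, of y1] less.prems(12) by linarith
      show "card (R'``{y2}) \<le> 1" using card_mono[OF fin sub, of y2] less.prems(13) by linarith
    qed
  qed
  qed
qed

lemma handshake:
  assumes "finite D" "finite F" "\<forall>e\<in>F. card e = 2 \<and> e \<subseteq> D"
  shows "(\<Sum>v\<in>D. card {e\<in>F. v \<in> e}) = 2 * card F"
proof -
  have "(\<Sum>v\<in>D. card {e\<in>F. v \<in> e}) = (\<Sum>v\<in>D. \<Sum>e\<in>F. if v \<in> e then 1 else 0)"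
    using assms(2) by (simp add: sum.inter_filter[symmetric])
  also have "\<dots> = (\<Sum>e\<in>F. \<Sum>v\<in>D. if v \<in> e then 1 else 0)" by (rule sum.swap)
  also have "\<dots> = (\<Sum>e\<in>F. card {v\<in>D. v \<in> e})"
    using assms(1) by (simp add: sum.inter_filter[symmetric])
  also have "\<dots> = (\<Sum>e\<in>F. 2)"
  proof (rule sum.cong)
    fix e assume "e \<in> F"
    then have "{v\<in>D. v \<in> e} = e" "card e = 2" using assms(3) by auto
    then show "card {v\<in>D. v \<in> e} = 2" by simp
  qed simp
  finally show ?thesis by simp
qed

theorem mainTheorem8:
  fixes V :: "'a set" and E :: "'a set set" and k :: nat
  assumes "simple_graph V E" and "k \<ge> 1"
  shows "2 * int (alpha_k k E) \<ge> int k * int (card V) - phi_graph k V E"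
proof -
  have finV: "finite V" using assms(1) unfolding simple_graph_def by auto
  have Esub: "\<forall>e\<in>E. \<exists>u v. e = {u,v} \<and> u \<noteq> v \<and> u \<in> V \<and> v \<in> V"
    using assms(1) unfolding simple_graph_def by (rule conjunct2)
  have EPow: "E \<subseteq> Pow V"
  proof
    fix e assume "e \<in> E"
    from bspec[OF Esub this] obtain u v where h: "e = {u,v} \<and> u \<noteq> v \<and> u \<in> V \<and> v \<in> V" by (elim exE)
    then show "e \<in> Pow V" by simp
  qed
  have finE: "finite E" using finite_subset[OF EPow] finV by simp
  have card2: "card e = 2" if "e \<in> E" for e
  proof -
    from bspec[OF Esub that] obtain u v where h: "e = {u,v} \<and> u \<noteq> v \<and> u \<in> V \<and> v \<in> V" by (elim exE)
    then show ?thesis by simp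
  qed
  define C where "C = {card F | F. F \<subseteq> E \<and> k_edge_colorable k F}"
  have finC: "finite C"
  proof -
    have "C \<subseteq> card ` Pow E" unfolding C_def by blast
    then show ?thesis by (rule finite_subset) (simp add: finE)
  qed
  have "k_edge_colorable k {}" unfolding k_edge_colorable_def by simp
  then have "card {} \<in> C" unfolding C_def by (intro CollectI exI[of _ "{}"]) simp
  then have "C \<noteq> {}" by blast
  have aC: "alpha_k k E = Max C" unfolding alpha_k_def C_def ..
  have "alpha_k k E \<in> C" unfolding aC using Max_in[OF finC \<open>C \<noteq> {}\<close>] .
  then obtain H where H: "H \<subseteq> E" "k_edge_colorable k H" "card H = alpha_k k E"
    unfolding C_def by auto
  have maxH: "card F \<le> card H" if "F \<subseteq> E" "k_edge_colorable k F" for F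
  proof -
    have "card F \<in> C" unfolding C_def using that by blast
    then have "card F \<le> Max C" using Max_ge[OF finC] by blast
    then show ?thesis using H(3) aC by simp
  qed
  obtain c where c: "proper k H c" using H(2) kec_iff by blast
  have cpr: "\<forall>e\<in>H. \<forall>f\<in>H. e \<noteq> f \<and> e \<inter> f \<noteq> {} \<longrightarrow> c e \<noteq> c f" using c unfolding proper_def by blast
  have finH: "finite H" using finite_subset[OF H(1) finE] .
  have noadd: False if "proper k H c'" "{u,w} \<in> E" "{u,w} \<notin> H" "a < k"
     "\<forall>f\<in>H. u \<in> f \<longrightarrow> c' f \<noteq> a" "\<forall>f\<in>H. w \<in> f \<longrightarrow> c' f \<noteq> a" for c' u w a
  proof -
    have "proper k (insert {u,w} H) (c'({u,w} := a))" by (rule proper_add[OF that(1,4,5,6,3)])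
    then have "k_edge_colorable k (insert {u,w} H)" using kec_iff by blast
    then have "card (insert {u,w} H) \<le> card H" using maxH H(1) that(2) by blast
    then show False using finH that(3) by simp
  qed
  define d where "d v = card {e\<in>H. v \<in> e}" for v
  define D where "D = {v\<in>V. d v < k}"
  have cinj: "inj_on c {e\<in>H. v \<in> e}" for v
    using c unfolding proper_def inj_on_def by blast
  have csub: "c ` {e\<in>H. v \<in> e} \<subseteq> {..<k}" for v
    using c unfolding proper_def by auto
  have dcard: "card (c ` {e\<in>H. v \<in> e}) = d v" for v
    unfolding d_def using cinj card_image by blast
  have dle: "d v \<le> k" for v
    using card_mono[OF finite_lessThan csub[of v]] dcard[of v] by simp
  have miss: "\<exists>a<k. \<forall>f\<in>H. u \<in> f \<longrightarrow> c f \<noteq> a" if "u \<in> D" for u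
  proof -
    have "card (c ` {e\<in>H. u \<in> e}) < card {..<k}" using that dcard D_def by simp
    have "\<not> {..<k} \<subseteq> c ` {e\<in>H. u \<in> e}"
    proof (rule notI)
      assume "{..<k} \<subseteq> c ` {e\<in>H. u \<in> e}"
      moreover have "finite (c ` {e\<in>H. u \<in> e})" using finH by simp
      ultimately have "card {..<k} \<le> card (c ` {e\<in>H. u \<in> e})" by (rule card_mono[rotated])
      then show False using \<open>card (c ` {e\<in>H. u \<in> e}) < card {..<k}\<close> by linarith
    qed
    then show ?thesis by blast
  qed
  have kempe: False if b: "b < k" "\<forall>f\<in>H. v \<in> f \<longrightarrow> c f \<noteq> b"
    and u: "u1 \<noteq> u2" "{u1,v} \<in> E" "{u1,v} \<notin> H" "{u2,v} \<in> E" "{u2,v} \<notin> H"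
    and a: "a < k" "\<forall>f\<in>H. u1 \<in> f \<longrightarrow> c f \<noteq> a" "\<forall>f\<in>H. u2 \<in> f \<longrightarrow> c f \<noteq> a"
    for v b u1 u2 a
  proof -
    define R where "R = {(p,q). {p,q} \<in> H \<and> (c {p,q} = a \<or> c {p,q} = b)}"
    define S where "S = R\<^sup>* `` {v}"
    have cl: "\<forall>e\<in>H. (c e = a \<or> c e = b) \<longrightarrow> e \<inter> S \<noteq> {} \<longrightarrow> e \<subseteq> S"
    proof (intro ballI impI)
      fix e assume e: "e \<in> H" "c e = a \<or> c e = b" "e \<inter> S \<noteq> {}"
      have "e \<in> E" using e(1) H(1) by blast
      from bspec[OF Esub this] obtain p q where pq: "e = {p,q}" by (elim exE conjE)
      have "(p,q) \<in> R" "(q,p) \<in> R" using e pq unfolding R_def by (auto simp: insert_commute)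
      then show "e \<subseteq> S" using e(3) pq unfolding S_def by (auto intro: rtrancl_into_rtrancl)
    qed
    have vS: "v \<in> S" unfolding S_def by blast
    have inS: "u \<in> S" if "u \<in> {u1,u2}" for u
    proof (rule ccontr)
      assume nS: "u \<notin> S"
      define c' where "c' = (\<lambda>e. if e \<inter> S \<noteq> {} \<and> c e = a then b else if e \<inter> S \<noteq> {} \<and> c e = b then a else c e)"
      have pc': "proper k H c'" unfolding c'_def using proper_swap[OF c a(1) b(1) cl] .
      have m1: "\<forall>f\<in>H. v \<in> f \<longrightarrow> c' f \<noteq> a" using b(2) vS unfolding c'_def by auto
      have m2: "\<forall>f\<in>H. u \<in> f \<longrightarrow> c' f \<noteq> a"
      proof (intro ballI impI)
        fix f assume f: "f \<in> H" "u \<in> f"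
        have "c f \<noteq> a" using f a that by auto
        moreover have "\<not> (f \<inter> S \<noteq> {} \<and> (c f = a \<or> c f = b))" using cl f nS by blast
        ultimately show "c' f \<noteq> a" unfolding c'_def by auto
      qed
      have "{u,v} \<in> E" "{u,v} \<notin> H" using u that by auto
      then show False using noadd[OF pc' _ _ a(1) m2 m1] by blast
    qed
    have RV: "R \<subseteq> V \<times> V"
    proof
      fix x assume "x \<in> R"
      then obtain p q where x: "x = (p,q)" "{p,q} \<in> E" using H(1) unfolding R_def by blast
      then have "{p,q} \<subseteq> V" using EPow by blast
      then show "x \<in> V \<times> V" using x by auto
    qed
    have Rsym: "(q,p) \<in> R" if "(p,q) \<in> R" for p q using that unfolding R_def by (auto simp: insert_commute)
    have Rirr: "(p,p) \<notin> R" for p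
    proof
      assume "(p,p) \<in> R"
      then have "{p} \<in> E" using H(1) unfolding R_def by auto
      from card2[OF this] show False by simp
    qed
    have deg: "card (R``{p}) \<le> card T" if "\<forall>q\<in>R``{p}. c {p,q} \<in> T" "finite T" for p T
    proof -
      have "inj_on (\<lambda>q. c {p,q}) (R``{p})"
      proof (rule inj_onI)
        fix q q' assume qq: "q \<in> R``{p}" "q' \<in> R``{p}" "c {p,q} = c {p,q'}"
        show "q = q'"
        proof (rule ccontr)
          assume "q \<noteq> q'"
          moreover have "q \<noteq> p" "q' \<noteq> p" using qq Rirr by auto
          ultimately have "{p,q} \<noteq> {p,q'}"
          proof -
            assume h: "q \<noteq> q'" "q \<noteq> p" "q' \<noteq> p"
            show ?thesis
            proof
              assume "{p,q} = {p,q'}"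
              then have "q \<in> {p,q'}" by (metis insertI1 insertI2)
              then show False using h by simp
            qed
          qed
          moreover have "{p,q} \<in> H" "{p,q'} \<in> H" using qq unfolding R_def by auto
          ultimately show False using cpr[rule_format, of "{p,q}" "{p,q'}"] qq(3) by auto
        qed
      qed
      then have "card (R``{p}) = card ((\<lambda>q. c {p,q}) ` (R``{p}))" by (simp add: card_image)
      also have "\<dots> \<le> card T" using that by (intro card_mono) auto
      finally show ?thesis .
    qed
    show False
    proof (rule three_leaves[OF finV RV Rsym Rirr, of v u1 u2])
      show "card (R``{p}) \<le> 2" for p
      proof -
        have "\<forall>q\<in>R``{p}. c {p,q} \<in> {a,b}" unfolding R_def by auto
        then have "card (R``{p}) \<le> card {a,b}" using deg by blast
        moreover have "card {a,b} \<le> 2" by (cases "a = b") auto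
        ultimately show ?thesis by linarith
      qed
      show "card (R``{v}) \<le> 1" using deg[of v "{a}"] b(2) unfolding R_def by auto
      show "card (R``{u1}) \<le> 1" using deg[of u1 "{b}"] a(2) unfolding R_def by auto
      show "card (R``{u2}) \<le> 1" using deg[of u2 "{b}"] a(3) unfolding R_def by auto
      show "(v,u1) \<in> R\<^sup>*" "(v,u2) \<in> R\<^sup>*" using inS unfolding S_def by auto
      show "u1 \<noteq> v" using card2[OF u(2)] by auto
      show "u2 \<noteq> v" using card2[OF u(4)] by auto
      show "u1 \<noteq> u2" by (rule u(1))
    qed
  qed
  define M where "M = {e\<in>E. e \<notin> H \<and> e \<subseteq> D}"
  have key: "card {e\<in>M. v \<in> e} \<le> d v" if vD: "v \<in> D" for v
  proof -
    obtain b where b: "b<k" "\<forall>f\<in>H. v\<in>f \<longrightarrow> c f \<noteq> b" using miss[OF vD] by blast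
    define oth where "oth e = (SOME u. e = {u,v})" for e
    have oth: "e = {oth e, v}" if "e \<in> M" "v \<in> e" for e
    proof -
      have "e \<in> E" using that M_def by simp
      from bspec[OF Esub this] obtain p q where pq: "e = {p,q}" by (elim exE conjE)
      have "\<exists>u. e = {u,v}"
      proof (cases "v = p")
        case True then show ?thesis using pq by (auto simp: insert_commute)
      next
        case False then have "v = q" using pq that(2) by auto
        then show ?thesis using pq by auto
      qed
      then show ?thesis unfolding oth_def by (rule someI_ex)
    qed
    define mc where "mc u = (SOME a. a<k \<and> (\<forall>f\<in>H. u\<in>f \<longrightarrow> c f \<noteq> a))" for u
    have mc: "mc u < k \<and> (\<forall>f\<in>H. u\<in>f \<longrightarrow> c f \<noteq> mc u)" if "u \<in> D" for u
      unfolding mc_def using someI_ex[OF miss[OF that]] .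
    define g where "g e = mc (oth e)" for e
    have othD: "oth e \<in> D" "{oth e, v} \<in> E" "{oth e, v} \<notin> H" if "e \<in> M" "v \<in> e" for e
    proof -
      have eq: "e = {oth e, v}" using oth that .
      then show "oth e \<in> D" "{oth e, v} \<in> E" "{oth e, v} \<notin> H" using that unfolding M_def by auto
    qed
    have gin: "g e \<in> c ` {f\<in>H. v\<in>f}" if e: "e\<in>M" "v\<in>e" for e
    proof (rule ccontr)
      assume nin: "g e \<notin> c ` {f\<in>H. v \<in> f}"
      have m: "\<forall>f\<in>H. v\<in>f \<longrightarrow> c f \<noteq> g e"
      proof (intro ballI impI)
        fix f assume "f \<in> H" "v \<in> f"
        then have "c f \<in> c ` {f\<in>H. v\<in>f}" by blast
        then show "c f \<noteq> g e" using nin by metis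
      qed
      have "g e < k" "\<forall>f\<in>H. oth e\<in>f \<longrightarrow> c f \<noteq> g e" using mc[OF othD(1)[OF e]] unfolding g_def by auto
      then show False using noadd[OF c othD(2,3)[OF e]] m by blast
    qed
    have ginj: "inj_on g {e\<in>M. v\<in>e}"
    proof (rule inj_onI)
      fix e1 e2 assume e1: "e1 \<in> {e\<in>M. v\<in>e}" and e2: "e2 \<in> {e\<in>M. v\<in>e}" and geq: "g e1 = g e2"
      show "e1 = e2"
      proof (rule ccontr)
        assume ne: "e1 \<noteq> e2"
        have eq1: "e1 = {oth e1, v}" using oth e1 by blast
        have eq2: "e2 = {oth e2, v}" using oth e2 by blast
        have une: "oth e1 \<noteq> oth e2" using ne eq1 eq2 by auto
        have m1: "g e1 < k" "\<forall>f\<in>H. oth e1\<in>f \<longrightarrow> c f \<noteq> g e1" using mc[OF othD(1)] e1 unfolding g_def by auto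
        have m2: "\<forall>f\<in>H. oth e2\<in>f \<longrightarrow> c f \<noteq> g e1" using mc[OF othD(1)] e2 geq unfolding g_def by auto
        show False
          using kempe[OF b une othD(2,3) othD(2,3) m1 m2] e1 e2 by blast
      qed
    qed
    have "card {e\<in>M. v \<in> e} = card (g ` {e\<in>M. v\<in>e})" using ginj by (simp add: card_image)
    also have "\<dots> \<le> card (c ` {f\<in>H. v\<in>f})"
      by (rule card_mono) (use finH gin in auto)
    also have "\<dots> = d v" by (rule dcard)
    finally show ?thesis .
  qed
  have finD: "finite D" using finV unfolding D_def by simp
  have DV: "D \<subseteq> V" unfolding D_def by blast
  have finM: "finite M" using finE unfolding M_def by simp
  define IH where "IH = {e\<in>H. e \<subseteq> D}"
  have finIH: "finite IH" using finH unfolding IH_def by simp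
  have I: "induced_edges E D = IH \<union> M" unfolding induced_edges_def IH_def M_def using H(1) by auto
  have disj: "IH \<inter> M = {}" unfolding IH_def M_def by auto
  have cI: "card (induced_edges E D) = card IH + card M" unfolding I using disj finIH finM by (simp add: card_Un_disjoint)
  have hIH: "(\<Sum>v\<in>D. card {e\<in>IH. v\<in>e}) = 2 * card IH"
    by (rule handshake[OF finD finIH]) (use H(1) card2 in \<open>auto simp: IH_def\<close>)
  have hM: "(\<Sum>v\<in>D. card {e\<in>M. v\<in>e}) = 2 * card M"
    by (rule handshake[OF finD finM]) (use card2 in \<open>auto simp: M_def\<close>)
  have hH: "(\<Sum>v\<in>V. d v) = 2 * card H"
    unfolding d_def by (rule handshake[OF finV finH]) (use H(1) card2 EPow in auto)
  have s1: "(\<Sum>v\<in>D. card {e\<in>IH. v\<in>e}) \<le> (\<Sum>v\<in>D. d v)"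
  proof (rule sum_mono)
    fix v show "card {e\<in>IH. v\<in>e} \<le> d v" unfolding d_def IH_def by (rule card_mono) (use finH in auto)
  qed
  have s2: "(\<Sum>v\<in>D. card {e\<in>M. v\<in>e}) \<le> (\<Sum>v\<in>D. d v)"
    by (rule sum_mono) (rule key)
  have spl: "(\<Sum>v\<in>V. d v) = (\<Sum>v\<in>V-D. d v) + (\<Sum>v\<in>D. d v)"
    using sum.subset_diff[OF DV finV] by simp
  have outer: "(\<Sum>v\<in>V-D. d v) = k * card (V-D)"
  proof -
    have "(\<Sum>v\<in>V-D. d v) = (\<Sum>v\<in>V-D. k)"
    proof (rule sum.cong)
      fix v assume "v \<in> V - D"
      then have "\<not> d v < k" unfolding D_def by auto
      then show "d v = k" using dle[of v] by simp
    qed simp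
    then show ?thesis by simp
  qed
  have cVD: "card V = card (V-D) + card D" using card_Diff_subset[OF finD DV] card_mono[OF finV DV] by simp
  have nat_ineq: "k * card V + card (induced_edges E D) \<le> 2 * card H + k * card D"
  proof -
    have "card IH + card M \<le> (\<Sum>v\<in>D. d v)" using s1 s2 hIH hM by linarith
    then show ?thesis using cI cVD hH spl outer by (simp add: algebra_simps)
  qed
  have phi: "phi_set k E D \<le> phi_graph k V E"
    unfolding phi_graph_def by (rule Max_ge) (use finV DV in auto)
  have int_ineq: "int k * int (card V) + int (card (induced_edges E D)) \<le> 2 * int (card H) + int k * int (card D)"
    using nat_ineq by (metis of_nat_add of_nat_le_iff of_nat_mult of_nat_numeral)
  show ?thesis using phi int_ineq H(3) unfolding phi_set_def by linarith
qed

end
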